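(* Consider the online instance reservation problem described in the context, with parameters $p>0$, $\alpha\in[0,1)$, $\tau\ge 1$, and let $\beta = 1/(1-\alpha)$. Fix an arbitrary demand sequence $d_1,\dots,d_T$. Let $n_\beta$ be the total number of instances reserved by the deterministic online algorithm $A_\beta$, and let $n_{\mathrm{OPT}}$ be the total number of instances reserved, $\sum_t r^*_t$, by an optimal offline solution $(o^*_t, r^*_t)$ of the problem for this demand sequence. Then $n_\beta \le n_{\mathrm{OPT}}$.
   Context: Instance reservation problem: time is slotted $t=1,2,\dots,T$. At each time $t$ a demand $d_t\in\{0,1,2,\dots\}$ (number of instances needed) arrives; set $d_t=0$ for $t\le 0$. A user chooses integers $o_t\ge 0$ (on-demand instances used at $t$) and $r_t\ge 0$ (instances newly reserved at $t$; $r_t=0$ for $t\le 0$), subject to $o_t+\sum_{i=t-\tau+1}^{t} r_i\ge d_t$ for all $t$, where $\tau$ is the reservation period. The reservation fee is normalized to $1$, the on-demand hourly rate is $p$ (the paper assumes throughout $p\ll 1$), and reserved instances run at discounted rate $\alpha p$ with $\alpha\in[0,1]$. The total cost is $C=\sum_{t=1}^T\big(o_t p + r_t + \alpha p(d_t-o_t)\big)$. The optimal offline solution (OPT) minimizes $C$ knowing the whole sequence $d_1,\dots,d_T$ in advance; an online algorithm chooses $o_t,r_t$ knowing only $d_1,\dots,d_t$. Algorithm $A_z$ (for a threshold $z\ge 0$): maintain integers $x_i$ for all integers $i$, initially $x_i=0$. At each time $t$, upon arrival of $d_t$: while $p\cdot\big|\{i: t-\tau+1\le i\le t,\ d_i>x_i\}\big|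 > z$, do: increase $r_t$ by $1$; increase $x_i$ by $1$ for $i=t,\dots,t+\tau-1$; increase $x_i$ by $1$ for $i=t-\tau+1,\dots,t-1$ (a "phantom" reservation). After the loop, set $o_t=\max\{d_t-x_t,0\}$. $A_\beta$ denotes $A_z$ with $z=\beta=1/(1-\alpha)$. *)

theory Defs
  imports Main Complex_Main
begin

(* Time slots are t = 1,2,...,T (type nat); indices <= 0 carry zero demand and
   zero reservations, so they are simply omitted. *)

definition win :: "nat \<Rightarrow> nat \<Rightarrow> nat set" where
  "win tau t = {i. 1 \<le> i \<and> i \<le> t \<and> t < i + tau}"

definition feasible :: "nat \<Rightarrow> nat \<Rightarrow> (nat \<Rightarrow> nat) \<Rightarrow> (nat \<Rightarrow> nat) \<Rightarrow> (nat \<Rightarrow> nat) \<Rightarrow> bool" where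
  "feasible T tau d od r \<longleftrightarrow>
     (\<forall>t. r t \<noteq> 0 \<longrightarrow> 1 \<le> t \<and> t \<le> T) \<and>
     (\<forall>t\<in>{1..T}. d t \<le> od t + (\<Sum>i\<in>win tau t. r i))"

definition cost :: "real \<Rightarrow> real \<Rightarrow> nat \<Rightarrow> (nat \<Rightarrow> nat) \<Rightarrow> (nat \<Rightarrow> nat) \<Rightarrow> (nat \<Rightarrow> nat) \<Rightarrow> real" where
  "cost p \<alpha> T d od r = (\<Sum>t=1..T. real (od t) * p + real (r t) + \<alpha> * p * (real (d t) - real (od t)))"

(* The while loop at time t increases all x_i with
   t - tau + 1 <= i <= t + tau - 1 by one per iteration (real + phantom
   reservation), and stops as soon as p * |{i in window : d_i > x_i}| <= z.
   Hence the number of iterations is the least k with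
   p * |{i in window : d_i > x_i + k}| <= z. *)
definition loop_count :: "real \<Rightarrow> real \<Rightarrow> nat \<Rightarrow> (nat \<Rightarrow> nat) \<Rightarrow> (nat \<Rightarrow> nat) \<Rightarrow> nat \<Rightarrow> nat" where
  "loop_count p z tau d x t =
     (LEAST k::nat. p * real (card {i\<in>win tau t. x i + k < d i}) \<le> z)"

definition bump :: "nat \<Rightarrow> (nat \<Rightarrow> nat) \<Rightarrow> nat \<Rightarrow> nat \<Rightarrow> (nat \<Rightarrow> nat)" where
  "bump tau x t k = (\<lambda>i. if t < i + tau \<and> i < t + tau then x i + k else x i)"

fun alg_x :: "real \<Rightarrow> real \<Rightarrow> nat \<Rightarrow> (nat \<Rightarrow> nat) \<Rightarrow> nat \<Rightarrow> (nat \<Rightarrow> nat)" where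
  "alg_x p z tau d 0 = (\<lambda>_. 0)"
| "alg_x p z tau d (Suc t) =
     bump tau (alg_x p z tau d t) (Suc t) (loop_count p z tau d (alg_x p z tau d t) (Suc t))"

definition alg_r :: "real \<Rightarrow> real \<Rightarrow> nat \<Rightarrow> (nat \<Rightarrow> nat) \<Rightarrow> nat \<Rightarrow> nat" where
  "alg_r p z tau d t = loop_count p z tau d (alg_x p z tau d (t - 1)) t"

definition alg_n :: "real \<Rightarrow> real \<Rightarrow> nat \<Rightarrow> (nat \<Rightarrow> nat) \<Rightarrow> nat \<Rightarrow> nat" where
  "alg_n p z tau d T = (\<Sum>t=1..T. alg_r p z tau d t)"

end

theory Submission
  imports Defs
begin

lemma fin_win: "finite (win tau t)"
  unfolding win_def by (rule finite_subset[of _ "{..t}"]) auto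

lemma cost_lin: "cost p \<alpha> T d od r = p*(1-\<alpha>)*(\<Sum>t=1..T. real (od t)) + (\<Sum>t=1..T. real (r t)) + \<alpha>*p*(\<Sum>t=1..T. real (d t))"
proof -
  have "cost p \<alpha> T d od r = (\<Sum>t=1..T. p*(1-\<alpha>)*real (od t) + real (r t) + \<alpha>*p*real (d t))"
    unfolding cost_def by (rule sum.cong) (auto simp: algebra_simps)
  also have "\<dots> = p*(1-\<alpha>)*(\<Sum>t=1..T. real (od t)) + (\<Sum>t=1..T. real (r t)) + \<alpha>*p*(\<Sum>t=1..T. real (d t))"
    by (simp add: sum.distrib sum_distrib_left)
  finally show ?thesis .
qed

lemma alg_x_formula:
  "alg_x p z tau d t i = (\<Sum>j=1..t. if j < i + tau \<and> i < j + tau then alg_r p z tau d j else 0)"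
proof (induction t)
  case 0
  then show ?case by simp
next
  case (Suc t)
  have "alg_r p z tau d (Suc t) = loop_count p z tau d (alg_x p z tau d t) (Suc t)"
    by (simp add: alg_r_def)
  then show ?case using Suc by (auto simp: bump_def)
qed

lemma split_sum:
  fixes f :: "nat \<Rightarrow> nat"
  assumes "i \<le> t"
  shows "(\<Sum>j=1..t. f j) = (\<Sum>j=1..i-tau. f j) + (\<Sum>j=1..t. if i < j + tau then f j else 0)"
proof -
  have "(\<Sum>j=1..t. f j) = (\<Sum>j=1..t. (if i < j + tau then 0 else f j) + (if i < j + tau then f j else 0))"
    by (rule sum.cong) auto
  also have "\<dots> = (\<Sum>j=1..t. if i < j + tau then 0 else f j) + (\<Sum>j=1..t. if i < j + tau then f j else 0)"
    by (simp add: sum.distrib)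
  also have "(\<Sum>j=1..t. if i < j + tau then 0 else f j) = (\<Sum>j=1..i-tau. if i < j + tau then 0 else f j)"
    by (rule sum.mono_neutral_right) (use assms in auto)
  also have "\<dots> = (\<Sum>j=1..i-tau. f j)"
    by (rule sum.cong) auto
  finally show ?thesis .
qed

lemma opt_cond:
  fixes p \<alpha> :: real and tau T t :: nat and d od r :: "nat \<Rightarrow> nat"
  assumes "p > 0" and "0 \<le> \<alpha>" and "\<alpha> < 1" and "tau \<ge> 1"
    and feas: "feasible T tau d od r"
    and opt: "\<forall>od' r'. feasible T tau d od' r' \<longrightarrow> cost p \<alpha> T d od r \<le> cost p \<alpha> T d od' r'"
    and t: "1 \<le> t" "t \<le> T"
  shows "p * real (card {i\<in>win tau t. (\<Sum>j\<in>win tau i. r j) < d i}) \<le> 1/(1-\<alpha>)"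
proof -
  define Rr where "Rr = (\<lambda>i. \<Sum>j\<in>win tau i. r j)"
  define od0 where "od0 = (\<lambda>i. d i - Rr i)"
  define a where "a = max 1 (t+1-tau)"
  define r' where "r' = (\<lambda>j. r j + (if j = a then 1 else 0))"
  define Rr' where "Rr' = (\<lambda>i. \<Sum>j\<in>win tau i. r' j)"
  define od1 where "od1 = (\<lambda>i. d i - Rr' i)"
  define B where "B = {i\<in>{1..T}. a \<le> i \<and> i < a + tau \<and> Rr i < d i}"
  have a1: "1 \<le> a" "a \<le> T" "a \<le> t" using t assms(4) by (auto simp: a_def)
  have f0: "feasible T tau d od0 r" using feas unfolding feasible_def od0_def Rr_def by auto
  have f1: "feasible T tau d od1 r'" using feas a1 unfolding feasible_def od1_def Rr'_def r'_def
    by auto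
  have Rr'_eq: "Rr' i = Rr i + (if a \<in> win tau i then 1 else 0)" for i
    unfolding Rr'_def Rr_def r'_def by (simp add: sum.distrib fin_win)
  have od0_le: "od0 i \<le> od i" if "i \<in> {1..T}" for i
    using feas that unfolding feasible_def od0_def Rr_def by force
  have od1_le: "od1 i + (if i \<in> B then 1 else 0) \<le> od0 i" if "i\<in>{1..T}" for i
  proof (cases "i \<in> B")
    case True
    then have "a \<in> win tau i" using a1 by (auto simp: B_def win_def)
    then show ?thesis using True by (auto simp: od1_def od0_def Rr'_eq B_def)
  next
    case False
    then show ?thesis by (auto simp: od1_def od0_def Rr'_eq)
  qed
  have S0: "(\<Sum>i=1..T. real (od0 i)) \<le> (\<Sum>i=1..T. real (od i))"
    by (rule sum_mono) (use od0_le in auto)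
  have "(\<Sum>i=1..T. od1 i + (if i \<in> B then 1 else 0)) \<le> (\<Sum>i=1..T. od0 i)"
    by (rule sum_mono) (use od1_le in auto)
  moreover have "(\<Sum>i=1..T. (if i \<in> B then 1 else 0::nat)) = card B"
  proof -
    have e: "{x\<in>{1..T}. x \<in> B} = B" by (auto simp: B_def)
    have "(\<Sum>i=1..T. (if i \<in> B then 1 else 0::nat)) = (\<Sum>i\<in>{x\<in>{1..T}. x \<in> B}. 1)"
      by (rule sum.inter_filter[symmetric]) simp
    then show ?thesis unfolding e by simp
  qed
  ultimately have "(\<Sum>i=1..T. od1 i) + card B \<le> (\<Sum>i=1..T. od0 i)"
    by (simp only: sum.distrib)
  then have S1: "(\<Sum>i=1..T. real (od1 i)) + real (card B) \<le> (\<Sum>i=1..T. real (od0 i))"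
    by (metis of_nat_add of_nat_le_iff of_nat_sum)
  have Sr: "(\<Sum>i=1..T. real (r' i)) = (\<Sum>i=1..T. real (r i)) + 1"
  proof -
    have "(\<Sum>i=1..T. real (r' i)) = (\<Sum>i=1..T. real (r i) + (if i = a then 1 else 0))"
      by (rule sum.cong) (auto simp: r'_def)
    then show ?thesis using a1 by (simp add: sum.distrib)
  qed
  have cB: "card {i\<in>win tau t. Rr i < d i} \<le> card B"
    by (rule card_mono) (use t a1 in \<open>auto simp: B_def win_def a_def\<close>)
  have "cost p \<alpha> T d od r \<le> cost p \<alpha> T d od1 r'" using opt f1 by blast
  then have "p*(1-\<alpha>)*(\<Sum>t=1..T. real (od t)) \<le> p*(1-\<alpha>)*(\<Sum>t=1..T. real (od1 t)) + 1"
    using Sr by (simp add: cost_lin)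
  moreover have "p*(1-\<alpha>)*(\<Sum>t=1..T. real (od0 t)) \<le> p*(1-\<alpha>)*(\<Sum>t=1..T. real (od t))"
    using S0 assms by (intro mult_left_mono) auto
  moreover have "p*(1-\<alpha>)*((\<Sum>t=1..T. real (od1 t)) + real (card B)) \<le> p*(1-\<alpha>)*(\<Sum>t=1..T. real (od0 t))"
    using S1 assms by (intro mult_left_mono) auto
  ultimately have c: "p*(1-\<alpha>)*real (card B) \<le> 1" by (simp only: distrib_left)
  moreover have "p*(1-\<alpha>)*real (card {i\<in>win tau t. Rr i < d i}) \<le> p*(1-\<alpha>)*real (card B)"
    using cB assms by (intro mult_left_mono) auto
  ultimately have "p*(1-\<alpha>)*real (card {i\<in>win tau t. Rr i < d i}) \<le> 1" by linarith
  then have "(p*real (card {i\<in>win tau t. Rr i < d i})) * (1-\<alpha>) \<le> 1" by (simp only: mult_ac)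
  then show ?thesis using assms unfolding Rr_def by (simp add: pos_le_divide_eq)
qed


lemma prefix:
  fixes p \<alpha> :: real and tau T :: nat and d r :: "nat \<Rightarrow> nat"
  assumes p: "p > 0" and al: "\<alpha> < 1" and tau: "tau \<ge> 1"
    and oc: "\<And>t. 1 \<le> t \<Longrightarrow> t \<le> T \<Longrightarrow>
       p * real (card {i\<in>win tau t. (\<Sum>j\<in>win tau i. r j) < d i}) \<le> 1/(1-\<alpha>)"
  shows "t \<le> T \<Longrightarrow> (\<Sum>j=1..t. alg_r p (1/(1-\<alpha>)) tau d j) \<le> (\<Sum>j=1..t. r j)"
proof (induction t rule: less_induct)
  case (less t)
  define z where "z = 1/(1-\<alpha>)"
  have zpos: "z > 0" using al by (simp add: z_def)
  define A where "A = (\<lambda>t. \<Sum>j=1..t. alg_r p z tau d j)"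
  define O' where "O' = (\<lambda>t. \<Sum>j=1..t. r j)"
  have IH: "A s \<le> O' s" if "s < t" for s
    using less.IH[of s] that less.prems by (simp add: A_def O'_def z_def)
  show ?case
  proof (cases t)
    case 0
    then show ?thesis by simp
  next
    case (Suc s)
    define k where "k = alg_r p z tau d t"
    define x where "x = alg_x p z tau d s"
    have kdef: "k = loop_count p z tau d x t" by (simp add: k_def alg_r_def x_def Suc)
    have At: "A t = A s + k" by (simp add: A_def k_def Suc)
    have Ot: "O' s \<le> O' t" by (simp add: O'_def Suc)
    have "A t \<le> O' t"
    proof (cases "k = 0")
      case True
      then show ?thesis using At Ot IH[of s] Suc by simp
    next
      case False
      show ?thesis
      proof (rule ccontr)
        assume contra: "\<not> A t \<le> O' t"
        define P where "P = (\<lambda>k::nat. p * real (card {i\<in>win tau t. x i + k < d i}) \<le> z)"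
        have "P (\<Sum>i\<in>win tau t. d i)"
        proof -
          have e: "{i\<in>win tau t. x i + (\<Sum>i\<in>win tau t. d i) < d i} = {}"
          proof -
            have "d i \<le> x i + (\<Sum>i\<in>win tau t. d i)" if "i \<in> win tau t" for i
            proof -
              have "d i \<le> (\<Sum>i\<in>win tau t. d i)" by (rule member_le_sum) (use that fin_win in auto)
              then show ?thesis by simp
            qed
            then show "{i\<in>win tau t. x i + (\<Sum>i\<in>win tau t. d i) < d i} = {}" by (auto simp: not_less[symmetric])
          qed
          show ?thesis unfolding P_def e using zpos by simp
        qed
        then have "P k" unfolding kdef loop_count_def P_def[symmetric] by (rule LeastI)
        have "\<not> P (k-1)"
        proof
          assume "P (k-1)"
          then have "k \<le> k - 1" unfolding kdef loop_count_def P_def[symmetric] by (rule Least_le)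
          then show False using False by simp
        qed
        then have gt: "p * real (card {i\<in>win tau t. x i + (k-1) < d i}) > z"
          by (simp add: P_def)
        have sub: "{i\<in>win tau t. x i + (k-1) < d i} \<subseteq> {i\<in>win tau t. (\<Sum>j\<in>win tau i. r j) < d i}"
        proof safe
          fix i assume iw: "i \<in> win tau t" and lt: "x i + (k-1) < d i"
          have i1: "1 \<le> i" "i \<le> t" "t < i + tau" using iw by (auto simp: win_def)
          have tT: "t \<le> T" using less.prems .
          define SA where "SA = (\<Sum>j=1..t. if i < j + tau then alg_r p z tau d j else 0)"
          define SO where "SO = (\<Sum>j=1..t. if i < j + tau then r j else 0)"
          have xi: "x i = (\<Sum>j=1..s. if j < i + tau \<and> i < j + tau then alg_r p z tau d j else 0)"
            by (simp add: x_def alg_x_formula)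
          also have "\<dots> = (\<Sum>j=1..s. if i < j + tau then alg_r p z tau d j else 0)"
            by (rule sum.cong) (use i1 Suc in auto)
          finally have "x i + k = SA" using i1 by (simp add: SA_def Suc k_def)
          have "A t = A (i - tau) + SA" unfolding A_def SA_def by (rule split_sum) (use i1 in simp)
          moreover have "O' t = O' (i - tau) + SO" unfolding O'_def SO_def by (rule split_sum) (use i1 in simp)
          moreover have "A (i - tau) \<le> O' (i - tau)" by (rule IH) (use i1 tau in linarith)
          ultimately have "SO < SA" using contra by linarith
          moreover have "(\<Sum>j\<in>win tau i. r j) \<le> SO"
          proof -
            have "SO = (\<Sum>j\<in>{j\<in>{1..t}. i < j + tau}. r j)"
              unfolding SO_def by (rule sum.inter_filter[symmetric]) simp
            moreover have "win tau i \<subseteq> {j\<in>{1..t}. i < j + tau}" using i1 by (auto simp: win_def)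
            ultimately show ?thesis by (simp add: sum_mono2)
          qed
          ultimately show "(\<Sum>j\<in>win tau i. r j) < d i" using lt \<open>x i + k = SA\<close> False by linarith
        qed
        have "card {i\<in>win tau t. x i + (k-1) < d i} \<le> card {i\<in>win tau t. (\<Sum>j\<in>win tau i. r j) < d i}"
          by (rule card_mono) (use sub fin_win in auto)
        then have "p * real (card {i\<in>win tau t. x i + (k-1) < d i}) \<le> p * real (card {i\<in>win tau t. (\<Sum>j\<in>win tau i. r j) < d i})"
          using p by (simp add: mult_left_mono)
        moreover have "p * real (card {i\<in>win tau t. (\<Sum>j\<in>win tau i. r j) < d i}) \<le> z"
          using oc[of t] Suc less.prems by (simp add: z_def)
        ultimately show False using gt by linarith
      qed
    qed
    then show ?thesis by (simp add: A_def O'_def z_def)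
  qed
qed

theorem lemma2:
  fixes p \<alpha> :: real and tau T :: nat and d od r :: "nat \<Rightarrow> nat"
  assumes "p > 0" and "0 \<le> \<alpha>" and "\<alpha> < 1" and "tau \<ge> 1"
    and "feasible T tau d od r"
    and "\<forall>od' r'. feasible T tau d od' r' \<longrightarrow> cost p \<alpha> T d od r \<le> cost p \<alpha> T d od' r'"
  shows "alg_n p (1 / (1 - \<alpha>)) tau d T \<le> (\<Sum>t=1..T. r t)"
proof -
  have oc: "\<And>t. 1 \<le> t \<Longrightarrow> t \<le> T \<Longrightarrow>
       p * real (card {i\<in>win tau t. (\<Sum>j\<in>win tau i. r j) < d i}) \<le> 1/(1-\<alpha>)"
    using opt_cond[OF assms] by blast
  show ?thesis unfolding alg_n_def using prefix[OF assms(1,3,4) oc, of T] by blast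
qed

end
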